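(* Let $A$ be a real $m \times N$ matrix and let $h$ be a positive integer. Suppose that for every index set $H \subseteq \{1,\dots,N\}$ with $|H| \le h$, the $m \times |H|$ submatrix $A_H$ formed by the columns of $A$ indexed by $H$ has at least one row containing exactly one nonzero entry. Then every vector $\mathbf{x}\in\mathbb{R}^N$ with at most $k$ nonzero entries, where $k < \frac{h+1}{2}$, is the unique sparsest vector $\tilde{\mathbf{x}}$ satisfying $A\tilde{\mathbf{x}} = A\mathbf{x}$.
   Context: "Sparsest" means having the fewest nonzero entries. *)

theory Defs
  imports "HOL-Analysis.Analysis"
begin

definition nnz :: "real ^ 'n \<Rightarrow> nat" where
  "nnz x = card {j. x $ j \<noteq> 0}"

definition has_singleton_row :: "real ^ 'n ^ 'm \<Rightarrow> 'n set \<Rightarrow> bool" where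
  "has_singleton_row A H \<longleftrightarrow> (\<exists>i. card {j \<in> H. A $ i $ j \<noteq> 0} = 1)"

end

theory Submission
  imports Defs
begin

theorem theorem3:
  fixes A :: "real ^ 'n ^ 'm" and h k :: nat and x :: "real ^ 'n"
  assumes "h > 0"
    and "\<And>H. H \<noteq> {} \<Longrightarrow> card H \<le> h \<Longrightarrow> has_singleton_row A H"
    and "nnz x \<le> k"
    and "real k < (real h + 1) / 2"
  shows "\<forall>y. A *v y = A *v x \<longrightarrow> y \<noteq> x \<longrightarrow> nnz x < nnz y"
proof (intro allI impI, rule ccontr)
  fix y assume eq: "A *v y = A *v x" and ne: "y \<noteq> x" and nl: "\<not> nnz x < nnz y"
  define z where "z = y - x"
  define H where "H = {j. z $ j \<noteq> 0}"
  have Az: "A *v z = 0" using eq by (simp add: z_def matrix_vector_mult_diff_distrib)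
  have Hne: "H \<noteq> {}" using ne unfolding H_def z_def by (auto simp: vec_eq_iff)
  have sub: "H \<subseteq> {j. x $ j \<noteq> 0} \<union> {j. y $ j \<noteq> 0}" unfolding H_def z_def by auto
  have "card H \<le> card ({j. x $ j \<noteq> 0} \<union> {j. y $ j \<noteq> 0})"
    by (rule card_mono[OF _ sub]) simp
  also have "\<dots> \<le> nnz x + nnz y" unfolding nnz_def by (rule card_Un_le)
  also have "\<dots> \<le> h"
  proof -
    have "real (2*k) < real h + 1" using assms(4) by simp
    hence "2*k \<le> h" by linarith
    thus ?thesis using nl assms(3) by linarith
  qed
  finally have "card H \<le> h" .
  from assms(2)[OF Hne this] obtain i where ci: "card {j \<in> H. A $ i $ j \<noteq> 0} = 1"
    unfolding has_singleton_row_def by blast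
  then obtain j0 where S: "{j \<in> H. A $ i $ j \<noteq> 0} = {j0}" by (auto simp: card_Suc_eq)
  have "(A *v z) $ i = (\<Sum>j\<in>UNIV. A $ i $ j * z $ j)" by (simp add: matrix_vector_mult_def)
  also have "\<dots> = (\<Sum>j\<in>{j \<in> H. A $ i $ j \<noteq> 0}. A $ i $ j * z $ j)"
    by (rule sum.mono_neutral_right) (auto simp: H_def)
  also have "\<dots> = A $ i $ j0 * z $ j0" using S by simp
  also have "\<dots> \<noteq> 0" using S by (auto simp: H_def)
  finally show False using Az by simp
qed

end
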